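(* Let $\mathcal E\subset\mathcal L^n$ contain all balls and let $\diamond:\mathcal E\to\mathcal L^n$ be sequentially approximable on $\mathcal E$ by polarizations. Then there is a hyperplane $H$ such that for each ball $B$ in $\mathbb{R}^n$, $\diamond B=\diamond B^\dagger$ up to a null set, where $B^\dagger$ is the reflection of $B$ in $H$. Consequently, translations, Brock set maps with parameter $b\in(0,1]$, and Solynin set maps (with respect to arbitrary hyperplanes) are not sequentially approximable on $\mathcal E$ by polarizations.
   Context: $\mathcal L^n$: measurable subsets of $\mathbb{R}^n$ of finite measure. Set polarization with respect to an oriented hyperplane $H$ (closed halfspaces $H^\pm$, reflection $A^\dagger$): $(P_HA)\cap H^+=(A\cup A^\dagger)\cap H^+$, $(P_HA)\cap H^-=(A\cap A^\dagger)\cap H^-$. $\diamond$ is sequentially approximable on $\mathcal E$ by polarizations if there are polarizations $\diamond_k$ with $\|1_{(\diamond_k\circ\cdots\circ\diamond_1)A}-1_{\diamond A}\|_1\to0$ for all $A\in\mathcal E$. The Brock set map with parameter $b$ relative to $H_0=u^\perp+t_0u$ maps each ball $B(x,r)$ to $B(x+(b-1)(\langle x,u\rangle-t_0)u,r)$ (up to null sets). The Solynin set map relative to an oriented hyperplane $H_0$ acts on each line orthogonal to $H_0$, identified with $\mathbb{R}$ with $H_0$ corresponding to $t$, by $A\mapsto[t-r_A,t+r_A]\cup(A\cap[t,\infty))$ with $r_A\ge0$ chosen to preserve measure; in particular it fixes balls in $H_0^+$ and maps balls with center in the open negative side to balls centered in $H_0$. *)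

theory Defs
  imports "HOL-Analysis.Analysis"
begin

definition Ln :: "'a::euclidean_space set set" where
  "Ln = {A. A \<in> sets lebesgue \<and> emeasure lebesgue A < \<infinity>}"

text \<open>An oriented hyperplane is given by a unit normal u and an offset t:
  H = {x. x \<bullet> u = t}, closed halfspaces H+ = {x. x \<bullet> u \<ge> t},
  H- = {x. x \<bullet> u \<le> t}.\<close>
definition reflect :: "'a::euclidean_space \<Rightarrow> real \<Rightarrow> 'a \<Rightarrow> 'a" where
  "reflect u t x = x - (2 * (x \<bullet> u - t)) *\<^sub>R u"

definition polarize :: "'a::euclidean_space \<Rightarrow> real \<Rightarrow> 'a set \<Rightarrow> 'a set" where
  "polarize u t A =
     ((A \<union> reflect u t ` A) \<inter> {x. x \<bullet> u \<ge> t}) \<union>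
     ((A \<inter> reflect u t ` A) \<inter> {x. x \<bullet> u \<le> t})"

fun iter_pol :: "(nat \<Rightarrow> 'a::euclidean_space \<times> real) \<Rightarrow> nat \<Rightarrow> 'a set \<Rightarrow> 'a set" where
  "iter_pol H 0 A = A"
| "iter_pol H (Suc k) A = polarize (fst (H k)) (snd (H k)) (iter_pol H k A)"

definition L1_dist :: "'a::euclidean_space set \<Rightarrow> 'a set \<Rightarrow> ennreal" where
  "L1_dist X Y = (\<integral>\<^sup>+ x. ennreal \<bar>indicator X x - indicator Y x\<bar> \<partial>lebesgue)"

definition seq_approx :: "'a::euclidean_space set set \<Rightarrow> ('a set \<Rightarrow> 'a set) \<Rightarrow> bool" where
  "seq_approx E D \<longleftrightarrow>
     (\<exists>H :: nat \<Rightarrow> 'a \<times> real. (\<forall>k. norm (fst (H k)) = 1) \<and>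
        (\<forall>A\<in>E. ((\<lambda>k. L1_dist (iter_pol H k A) (D A)) \<longlonglongrightarrow> 0)))"

text \<open>Solynin set map relative to the oriented hyperplane (u,t) (u a unit vector):
  on the line through y (y \<in> u-orthogonal complement) the slice
  S = {s. y + s u \<in> A} is replaced by [t - r, t + r] \<union> (S \<inter> [t,\<infinity>)),
  with r \<ge> 0 chosen to preserve the (one-dimensional) measure.\<close>
definition slice :: "'a::euclidean_space \<Rightarrow> 'a set \<Rightarrow> 'a \<Rightarrow> real set" where
  "slice u A y = {s. y + s *\<^sub>R u \<in> A}"

definition sol_radius :: "real \<Rightarrow> real set \<Rightarrow> real" where
  "sol_radius t S = (THE r. r \<ge> 0 \<and>
      emeasure lebesgue ({t - r..t + r} \<union> (S \<inter> {t..})) = emeasure lebesgue S)"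

definition solynin :: "'a::euclidean_space \<Rightarrow> real \<Rightarrow> 'a set \<Rightarrow> 'a set" where
  "solynin u t A = {x. let y = x - (x \<bullet> u) *\<^sub>R u; S = slice u A y in
      x \<bullet> u \<in> {t - sol_radius t S..t + sol_radius t S} \<union> (S \<inter> {t..})}"

end

theory Submission
  imports Defs
begin

lemma reflect_inner: "norm u = 1 \<Longrightarrow> reflect u t x \<bullet> u = 2*t - x \<bullet> u"
  by (simp add: reflect_def inner_diff_left norm_eq_1 algebra_simps)

lemma reflect_invol: "norm u = 1 \<Longrightarrow> reflect u t (reflect u t x) = x"
proof -
  assume u: "norm u = 1"
  have "reflect u t (reflect u t x) = reflect u t x - (2 * (reflect u t x \<bullet> u - t)) *\<^sub>R u"
    by (rule reflect_def)
  also have "\<dots> = reflect u t x - (2 * (t - x \<bullet> u)) *\<^sub>R u"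
    using reflect_inner[OF u, of t x] by simp
  also have "\<dots> = x"
    by (simp add: reflect_def algebra_simps)
  finally show ?thesis .
qed

lemma reflect_dist: "norm u = 1 \<Longrightarrow> dist (reflect u t x) (reflect u t y) = dist x y"
proof -
  assume u: "norm u = 1"
  have uu: "u \<bullet> u = 1" using u by (simp add: norm_eq_1)
  have e: "reflect u t x - reflect u t y = (x - y) - (2 * ((x - y) \<bullet> u)) *\<^sub>R u"
    by (simp add: reflect_def algebra_simps inner_diff_left)
  have "(norm (reflect u t x - reflect u t y))^2 = (norm (x - y))^2"
    unfolding e power2_norm_eq_inner
    by (simp add: inner_diff_left inner_diff_right uu inner_commute algebra_simps)
  then show ?thesis by (simp add: dist_norm)
qed

lemma reflect_image_invol: "norm u = 1 \<Longrightarrow> reflect u t ` reflect u t ` A = A"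
  by (simp add: image_image reflect_invol)

lemma reflect_ball: "norm u = 1 \<Longrightarrow> reflect u t ` ball x r = ball (reflect u t x) r"
proof -
  assume u: "norm u = 1"
  show ?thesis
  proof (intro set_eqI iffI)
    fix y assume "y \<in> reflect u t ` ball x r"
    then show "y \<in> ball (reflect u t x) r" using reflect_dist[OF u] by auto
  next
    fix y assume y: "y \<in> ball (reflect u t x) r"
    have "reflect u t y \<in> ball x r" using y reflect_dist[OF u, of t x "reflect u t y"]
      by (simp add: reflect_invol[OF u])
    then show "y \<in> reflect u t ` ball x r"
      by (metis image_eqI reflect_invol[OF u])
  qed
qed

lemma polarize_reflect: "norm u = 1 \<Longrightarrow> polarize u t (reflect u t ` A) = polarize u t A"
  unfolding polarize_def by (simp add: reflect_image_invol Un_commute Int_commute)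

lemma iter_pol_reflect:
  assumes "norm (fst (H 0)) = 1"
  shows "iter_pol H (Suc k) (reflect (fst (H 0)) (snd (H 0)) ` A) = iter_pol H (Suc k) A"
  by (induction k) (simp_all add: polarize_reflect[OF assms])

lemma reflect_sets: "A \<in> sets lebesgue \<Longrightarrow> reflect u t ` A \<in> sets lebesgue"
  apply (rule differentiable_image_in_sets_lebesgue)
    apply simp_all
  unfolding reflect_def
  by (intro derivative_intros bounded_linear_imp_differentiable_on bounded_linear_inner_left)

lemma halfspace_sets:
  "{x::'a::euclidean_space. t \<le> x \<bullet> u} \<in> sets lebesgue"
  "{x::'a::euclidean_space. x \<bullet> u \<le> t} \<in> sets lebesgue"
proof -
  have "closed {x::'a. t \<le> x \<bullet> u}" using closed_halfspace_ge[of t u] by (simp add: inner_commute)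
  then show "{x::'a::euclidean_space. t \<le> x \<bullet> u} \<in> sets lebesgue" by simp
  have "closed {x::'a. x \<bullet> u \<le> t}" using closed_halfspace_le[of u t] by (simp add: inner_commute)
  then show "{x::'a::euclidean_space. x \<bullet> u \<le> t} \<in> sets lebesgue" by simp
qed

lemma polarize_sets: "A \<in> sets lebesgue \<Longrightarrow> polarize u t A \<in> sets lebesgue"
  unfolding polarize_def using halfspace_sets reflect_sets by blast

lemma iter_pol_sets: "A \<in> sets lebesgue \<Longrightarrow> iter_pol H k A \<in> sets lebesgue"
  by (induction k) (simp_all add: polarize_sets)


lemma L1_lower:
  assumes K: "K \<in> sets lebesgue" and P: "P \<in> sets lebesgue"
    and KX: "K \<subseteq> X" and KY: "K \<inter> Y = {}"
  shows "emeasure lebesgue K \<le> L1_dist P X + L1_dist P Y"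
proof -
  have "emeasure lebesgue (K - P) + emeasure lebesgue (K \<inter> P) = emeasure lebesgue ((K - P) \<union> (K \<inter> P))"
    by (rule plus_emeasure) (use K P in auto)
  moreover have "(K - P) \<union> (K \<inter> P) = K" by blast
  ultimately have "emeasure lebesgue K = emeasure lebesgue (K - P) + emeasure lebesgue (K \<inter> P)"
    by simp
  also have "emeasure lebesgue (K - P) \<le> L1_dist P X"
  proof -
    have "emeasure lebesgue (K - P) = (\<integral>\<^sup>+ x. indicator (K - P) x \<partial>lebesgue)"
      using K P by simp
    also have "\<dots> \<le> L1_dist P X" unfolding L1_dist_def
      by (intro nn_integral_mono) (use KX in \<open>auto simp: indicator_def\<close>)
    finally show ?thesis .
  qed
  also have "emeasure lebesgue (K \<inter> P) \<le> L1_dist P Y"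
  proof -
    have "emeasure lebesgue (K \<inter> P) = (\<integral>\<^sup>+ x. indicator (K \<inter> P) x \<partial>lebesgue)"
      using K P by simp
    also have "\<dots> \<le> L1_dist P Y" unfolding L1_dist_def
      by (intro nn_integral_mono) (use KY in \<open>auto simp: indicator_def\<close>)
    finally show ?thesis .
  qed
  finally show ?thesis by (simp add: add_mono)
qed

lemma key:
  assumes "seq_approx E D" "\<forall>x r. ball x r \<in> E"
  shows "\<exists>w \<tau>. norm (w::'a::euclidean_space) = 1 \<and> (\<forall>x r K. K \<in> sets lebesgue \<longrightarrow> K \<subseteq> D (ball x r)
     \<longrightarrow> K \<inter> D (reflect w \<tau> ` ball x r) = {} \<longrightarrow> emeasure lebesgue K = 0)"
proof -
  obtain H where H1: "\<forall>k. norm (fst (H k)) = 1"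
    and H2: "\<forall>A\<in>E. (\<lambda>k. L1_dist (iter_pol H k A) (D A)) \<longlonglongrightarrow> 0"
    using assms(1) unfolding seq_approx_def by blast
  define w where "w = fst (H 0)"
  define \<tau> where "\<tau> = snd (H 0)"
  have w1: "norm w = 1" using H1 w_def by simp
  show ?thesis
  proof (intro exI conjI allI impI)
    show "norm w = 1" by (rule w1)
    fix x r K assume K: "K \<in> sets lebesgue" "K \<subseteq> D (ball x r)" "K \<inter> D (reflect w \<tau> ` ball x r) = {}"
    define B where "B = ball x r"
    define B' where "B' = reflect w \<tau> ` B"
    have BE: "B \<in> E" using assms(2) B_def by simp
    have B'E: "B' \<in> E" using assms(2) B'_def B_def reflect_ball[OF w1] by simp
    have P_eq: "iter_pol H (Suc k) B' = iter_pol H (Suc k) B" for k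
      unfolding B'_def w_def \<tau>_def by (rule iter_pol_reflect) (use H1 in simp)
    have Pm: "iter_pol H (Suc k) B \<in> sets lebesgue" for k
      by (rule iter_pol_sets) (simp add: B_def)
    have lim1: "(\<lambda>k. L1_dist (iter_pol H (Suc k) B) (D B)) \<longlonglongrightarrow> 0"
      using H2 BE LIMSEQ_Suc by blast
    have lim2: "(\<lambda>k. L1_dist (iter_pol H (Suc k) B) (D B')) \<longlonglongrightarrow> 0"
    proof -
      have "(\<lambda>k. L1_dist (iter_pol H (Suc k) B') (D B')) \<longlonglongrightarrow> 0"
        using H2 B'E LIMSEQ_Suc by blast
      then show ?thesis by (simp only: P_eq)
    qed
    have lim: "(\<lambda>k. L1_dist (iter_pol H (Suc k) B) (D B) + L1_dist (iter_pol H (Suc k) B) (D B')) \<longlonglongrightarrow> 0"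
      using tendsto_add[OF lim1 lim2] by simp
    have bound: "emeasure lebesgue K \<le> L1_dist (iter_pol H (Suc k) B) (D B) + L1_dist (iter_pol H (Suc k) B) (D B')" for k
      by (rule L1_lower[OF K(1) Pm]) (use K B_def B'_def in auto)
    have "emeasure lebesgue K \<le> 0"
      by (rule LIMSEQ_le_const[OF lim]) (use bound in auto)
    then show "emeasure lebesgue K = 0" by simp
  qed
qed


lemma ball_pos: "0 < emeasure lebesgue (ball (c::'a::euclidean_space) 1)"
  using content_ball_pos[of 1 c] emeasure_lborel_ball_finite[of c 1]
  by (simp add: emeasure_eq_ennreal_measure)

lemma inner_le_norm1: "norm (u::'a::euclidean_space) = 1 \<Longrightarrow> \<bar>x \<bullet> u\<bar> \<le> norm x"
  using Cauchy_Schwarz_ineq2[of x u] by simp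

lemma ball_disjoint:
  assumes w: "norm (w::'a::euclidean_space) = 1" and d: "2 \<le> (p - q) \<bullet> w"
  shows "ball p 1 \<inter> ball q 1 = {}"
proof (rule ccontr)
  assume "ball p 1 \<inter> ball q 1 \<noteq> {}"
  then obtain z where z: "dist p z < 1" "dist q z < 1" by auto
  have "\<bar>(p - z) \<bullet> w\<bar> < 1" using inner_le_norm1[OF w, of "p - z"] z by (simp add: dist_norm)
  moreover have "\<bar>(q - z) \<bullet> w\<bar> < 1" using inner_le_norm1[OF w, of "q - z"] z by (simp add: dist_norm)
  moreover have "(p - q) \<bullet> w = (p - z) \<bullet> w - (q - z) \<bullet> w" by (simp add: inner_diff_left)
  ultimately show False using d by linarith
qed

lemma reflect_diff: "x - reflect w \<tau> x = (2 * (x \<bullet> w - \<tau>)) *\<^sub>R w"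
  by (simp add: reflect_def)

lemma part1:
  assumes "\<forall>x r. ball x r \<in> E" "\<forall>A\<in>E. D A \<in> Ln" "seq_approx E D"
  shows "\<exists>u t. norm (u::'a::euclidean_space) = 1 \<and>
          (\<forall>x r. (D (ball x r) - D (reflect u t ` ball x r)) \<union>
                 (D (reflect u t ` ball x r) - D (ball x r)) \<in> null_sets lebesgue)"
proof -
  obtain w \<tau> where w: "norm (w::'a) = 1" and kw: "\<forall>x r K. K \<in> sets lebesgue \<longrightarrow> K \<subseteq> D (ball x r)
     \<longrightarrow> K \<inter> D (reflect w \<tau> ` ball x r) = {} \<longrightarrow> emeasure lebesgue K = 0"
    using key[OF assms(3,1)] by blast
  show ?thesis
  proof (intro exI conjI allI)
    show "norm w = 1" by (rule w)
    fix x r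
    have m1: "D (ball x r) \<in> sets lebesgue" using assms(1,2) by (auto simp: Ln_def)
    have m2: "D (reflect w \<tau> ` ball x r) \<in> sets lebesgue" using assms(1,2) reflect_ball[OF w]
      by (auto simp: Ln_def)
    have e1: "emeasure lebesgue (D (ball x r) - D (reflect w \<tau> ` ball x r)) = 0"
      using kw[rule_format, of "D (ball x r) - D (reflect w \<tau> ` ball x r)" x r] m1 m2 by auto
    have eq1: "D (ball (reflect w \<tau> x) r) = D (reflect w \<tau> ` ball x r)"
      by (simp add: reflect_ball[OF w])
    have eq2: "reflect w \<tau> ` ball (reflect w \<tau> x) r = ball x r"
      by (simp add: reflect_ball[OF w] reflect_invol[OF w])
    have e2: "emeasure lebesgue (D (reflect w \<tau> ` ball x r) - D (ball x r)) = 0"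
      using kw[rule_format, of "D (reflect w \<tau> ` ball x r) - D (ball x r)" "reflect w \<tau> x" r] m1 m2
      unfolding eq1 eq2 by auto
    have "D (ball x r) - D (reflect w \<tau> ` ball x r) \<in> null_sets lebesgue"
      using e1 m1 m2 by (simp add: null_sets_def)
    moreover have "D (reflect w \<tau> ` ball x r) - D (ball x r) \<in> null_sets lebesgue"
      using e2 m1 m2 by (simp add: null_sets_def)
    ultimately show "(D (ball x r) - D (reflect w \<tau> ` ball x r)) \<union>
                 (D (reflect w \<tau> ` ball x r) - D (ball x r)) \<in> null_sets lebesgue"
      by (rule null_sets.Un)
  qed
qed

lemma part2:
  assumes "\<forall>x r. ball x r \<in> E"
  shows "\<not> seq_approx E (\<lambda>A. (\<lambda>x. x + v) ` A)"
proof
  assume sa: "seq_approx E (\<lambda>A. (\<lambda>x. x + v) ` A)"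
  obtain w \<tau> where w: "norm (w::'a::euclidean_space) = 1" and kw: "\<forall>x r K. K \<in> sets lebesgue \<longrightarrow> K \<subseteq> (\<lambda>x. x + v) ` (ball x r)
     \<longrightarrow> K \<inter> (\<lambda>x. x + v) ` (reflect w \<tau> ` ball x r) = {} \<longrightarrow> emeasure lebesgue K = 0"
    using key[OF sa assms] by blast
  have tr: "(\<lambda>x. x + v) ` ball p 1 = ball (p + v) 1" for p
    by (auto simp: dist_norm algebra_simps intro!: image_eqI [where x = "y - v" for y])
  define c where "c = (\<tau> + 1) *\<^sub>R w"
  have cw: "c \<bullet> w = \<tau> + 1" using w by (simp add: c_def norm_eq_1)
  have "((c + v) - (reflect w \<tau> c + v)) \<bullet> w = 2"
    using reflect_diff[of c w \<tau>] cw w by (simp add: norm_eq_1)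
  then have disj: "ball (c + v) 1 \<inter> ball (reflect w \<tau> c + v) 1 = {}"
    by (intro ball_disjoint[OF w]) simp
  have "emeasure lebesgue (ball (c + v) 1) = 0"
    using kw[rule_format, of "ball (c + v) 1" c 1] disj
    by (simp add: tr reflect_ball[OF w])
  then show False using ball_pos[of "c + v"] by simp
qed


lemma part3:
  assumes balls: "\<forall>x r. ball x r \<in> E" and DL: "\<forall>A\<in>E. D A \<in> Ln"
    and u: "norm (u::'a::euclidean_space) = 1" and b: "0 < b" "b \<le> 1"
    and N: "\<forall>x r. (D (ball x r) - ball (x + ((b - 1) * (x \<bullet> u - tz)) *\<^sub>R u) r) \<union>
              (ball (x + ((b - 1) * (x \<bullet> u - tz)) *\<^sub>R u) r - D (ball x r)) \<in> null_sets lebesgue"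
  shows "\<not> seq_approx E D"
proof
  assume sa: "seq_approx E D"
  obtain w \<tau> where w: "norm (w::'a) = 1" and kw: "\<forall>x r K. K \<in> sets lebesgue \<longrightarrow> K \<subseteq> D (ball x r)
     \<longrightarrow> K \<inter> D (reflect w \<tau> ` ball x r) = {} \<longrightarrow> emeasure lebesgue K = 0"
    using key[OF sa balls] by blast
  define f where "f x = x + ((b - 1) * (x \<bullet> u - tz)) *\<^sub>R u" for x
  define c where "c = (\<tau> + 1 / b) *\<^sub>R w"
  define c' where "c' = reflect w \<tau> c"
  have cw: "c \<bullet> w = \<tau> + 1 / b" using w by (simp add: c_def norm_eq_1)
  have cc: "c - c' = (2 / b) *\<^sub>R w"
    using reflect_diff[of c w \<tau>] cw by (simp add: c'_def)
  have fd: "f c - f c' = (c - c') + ((b - 1) * ((c - c') \<bullet> u)) *\<^sub>R u"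
    by (simp add: f_def algebra_simps inner_diff_left)
  define a where "a = w \<bullet> u"
  have a2: "a^2 \<le> 1"
  proof -
    have "\<bar>a\<bar> \<le> 1" using inner_le_norm1[OF u, of w] w by (simp add: a_def)
    then show ?thesis by (simp add: abs_square_le_1)
  qed
  have "(f c - f c') \<bullet> w = (2/b)*(w \<bullet> w) + ((b-1)*((2/b)*(w \<bullet> u)))*(u \<bullet> w)"
    unfolding fd cc by (simp only: inner_add_left inner_scaleR_left)
  also have "\<dots> = (2/b) + ((b-1)*((2/b)*a))*a"
    using w by (simp add: norm_eq_1 a_def inner_commute)
  also have "\<dots> = (2 / b) * (1 + (b - 1) * a^2)"
    using b by (simp add: field_simps power2_eq_square)
  finally have "(f c - f c') \<bullet> w = (2 / b) * (1 + (b - 1) * a^2)" .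
  moreover have "b \<le> 1 + (b - 1) * a^2"
  proof -
    have "(b - 1) * 1 \<le> (b - 1) * a^2" using b a2 by (intro mult_left_mono_neg) auto
    then show ?thesis by simp
  qed
  then have "(2 / b) * b \<le> (2 / b) * (1 + (b - 1) * a^2)" using b by (intro mult_left_mono) auto
  ultimately have "2 \<le> (f c - f c') \<bullet> w" using b by simp
  then have disj: "ball (f c) 1 \<inter> ball (f c') 1 = {}" by (rule ball_disjoint[OF w])
  have B'eq: "reflect w \<tau> ` ball c 1 = ball c' 1" by (simp add: reflect_ball[OF w] c'_def)
  define DB where "DB = D (ball c 1)"
  define DB' where "DB' = D (ball c' 1)"
  have m1: "DB \<in> sets lebesgue" using balls DL by (auto simp: Ln_def DB_def)
  have m2: "DB' \<in> sets lebesgue" using balls DL by (auto simp: Ln_def DB'_def)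
  define K where "K = ball (f c) 1 \<inter> DB - DB'"
  have "ball (f c) 1 \<in> sets lebesgue" by simp
  then have Km: "K \<in> sets lebesgue" using m1 m2 unfolding K_def by blast
  have "emeasure lebesgue K = 0"
    using kw[rule_format, of K c 1] Km unfolding B'eq by (auto simp: K_def DB_def DB'_def)
  define N1 where "N1 = (DB - ball (f c) 1) \<union> (ball (f c) 1 - DB)"
  define N2 where "N2 = (DB' - ball (f c') 1) \<union> (ball (f c') 1 - DB')"
  have N1: "N1 \<in> null_sets lebesgue" using N[rule_format, of c 1] by (simp add: N1_def DB_def f_def)
  have N2: "N2 \<in> null_sets lebesgue" using N[rule_format, of c' 1] by (simp add: N2_def DB'_def f_def)
  have sub: "ball (f c) 1 \<subseteq> K \<union> (N1 \<union> N2)"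
    using disj by (auto simp: K_def N1_def N2_def)
  have "emeasure lebesgue (ball (f c) 1) \<le> emeasure lebesgue (K \<union> (N1 \<union> N2))"
    by (rule emeasure_mono[OF sub]) (use Km N1 N2 in auto)
  also have "\<dots> = emeasure lebesgue K"
    by (rule emeasure_Un_null_set[OF Km]) (use N1 N2 in auto)
  finally show False using \<open>emeasure lebesgue K = 0\<close> ball_pos[of "f c"] by simp
qed


lemma sol_in:
  assumes "z \<in> A" "t \<le> z \<bullet> u"
  shows "z \<in> solynin u t A"
  using assms by (simp add: solynin_def slice_def Let_def)

lemma sol_notin:
  assumes S: "slice u A (z - (z \<bullet> u) *\<^sub>R u) \<subseteq> {..<t}"
    and Sm: "emeasure lebesgue (slice u A (z - (z \<bullet> u) *\<^sub>R u)) \<le> ennreal (2 * \<rho>)"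
    and rho: "0 \<le> \<rho>" and zu: "t + \<rho> < z \<bullet> u"
  shows "z \<notin> solynin u t A"
proof -
  define S where "S = slice u A (z - (z \<bullet> u) *\<^sub>R u)"
  define m where "m = measure lebesgue S"
  have "emeasure lebesgue S < top"
    using le_less_trans[OF Sm[folded S_def] ennreal_less_top] .
  then have fin: "emeasure lebesgue S \<noteq> top" by simp
  have em: "emeasure lebesgue S = ennreal m" using fin by (simp add: m_def emeasure_eq_ennreal_measure)
  have m0: "0 \<le> m" by (simp add: m_def)
  have SI: "S \<inter> {t..} = {}" using S S_def by auto
  have R: "sol_radius t S = m / 2"
    unfolding sol_radius_def
  proof (rule the_equality)
    show "0 \<le> m / 2 \<and> emeasure lebesgue ({t - m / 2..t + m / 2} \<union> (S \<inter> {t..})) = emeasure lebesgue S"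
      using m0 by (simp add: SI em)
  next
    fix r assume r: "0 \<le> r \<and> emeasure lebesgue ({t - r..t + r} \<union> (S \<inter> {t..})) = emeasure lebesgue S"
    then have "emeasure lebesgue {t - r..t + r} = ennreal m" using em by (simp add: SI)
    moreover have "emeasure lebesgue {t - r..t + r} = ennreal (2 * r)" using r by simp
    ultimately have "ennreal (2 * r) = ennreal m" by simp
    then have "2 * r = m" using r m0 by (simp add: ennreal_inj)
    then show "r = m / 2" by simp
  qed
  have "ennreal m \<le> ennreal (2 * \<rho>)" using Sm em S_def by simp
  then have "m \<le> 2 * \<rho>" using rho by (simp add: ennreal_le_iff)
  then have "z \<bullet> u \<notin> {t - sol_radius t S..t + sol_radius t S} \<union> (S \<inter> {t..})"
    using R zu SI by auto
  then show ?thesis by (simp add: solynin_def S_def Let_def)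
qed


lemma proj_u: "norm (u::'a::euclidean_space) = 1 \<Longrightarrow> (z - (z \<bullet> u) *\<^sub>R u + s *\<^sub>R u) \<bullet> u = s"
  by (simp add: inner_diff_left inner_add_left norm_eq_1)

lemma slice_ball_sub:
  assumes u: "norm (u::'a::euclidean_space) = 1"
  shows "slice u (ball q 1) (z - (z \<bullet> u) *\<^sub>R u) \<subseteq> {q \<bullet> u - 1 <..< q \<bullet> u + 1}"
proof
  fix s assume "s \<in> slice u (ball q 1) (z - (z \<bullet> u) *\<^sub>R u)"
  then have d: "norm (q - (z - (z \<bullet> u) *\<^sub>R u + s *\<^sub>R u)) < 1"
    by (simp add: slice_def dist_norm)
  have "\<bar>(q - (z - (z \<bullet> u) *\<^sub>R u + s *\<^sub>R u)) \<bullet> u\<bar> < 1"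
    using inner_le_norm1[OF u] d le_less_trans by blast
  then have "\<bar>q \<bullet> u - s\<bar> < 1" using proj_u[OF u, of z s] by (simp add: inner_diff_left)
  then show "s \<in> {q \<bullet> u - 1 <..< q \<bullet> u + 1}" by auto
qed

lemma part4:
  assumes balls: "\<forall>x r. ball x r \<in> E" and u: "norm (u::'a::euclidean_space) = 1"
  shows "\<not> seq_approx E (solynin u t)"
proof
  assume sa: "seq_approx E (solynin u t)"
  obtain w \<tau> where w: "norm (w::'a) = 1" and kw: "\<forall>x r K. K \<in> sets lebesgue \<longrightarrow> K \<subseteq> solynin u t (ball x r)
     \<longrightarrow> K \<inter> solynin u t (reflect w \<tau> ` ball x r) = {} \<longrightarrow> emeasure lebesgue K = 0"
    using key[OF sa balls] by blast
  have ww: "w \<bullet> w = 1" and uu: "u \<bullet> u = 1" using w u by (simp_all add: norm_eq_1)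
  define a where "a = w \<bullet> u"
  have main: "\<exists>c. \<forall>z\<in>ball c 1. t + 1 < z \<bullet> u \<and>
      slice u (ball (reflect w \<tau> c) 1) (z - (z \<bullet> u) *\<^sub>R u) \<subseteq> {..<t} \<and>
      emeasure lebesgue (slice u (ball (reflect w \<tau> c) 1) (z - (z \<bullet> u) *\<^sub>R u)) \<le> ennreal (2 * 1)"
  proof (cases "a = 0")
    case False
    define M where "M = max (t + 2) (2 * \<tau> * a - t + 1)"
    define c where "c = (M / a) *\<^sub>R w"
    define c' where "c' = reflect w \<tau> c"
    have cu: "c \<bullet> u = M" using False by (simp add: c_def a_def)
    have cw: "c \<bullet> w = M / a" using ww by (simp add: c_def)
    have "c' \<bullet> u = c \<bullet> u - 2 * (c \<bullet> w - \<tau>) * a"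
      by (simp add: c'_def reflect_def inner_diff_left a_def)
    also have "\<dots> = 2 * \<tau> * a - M" using False by (simp add: cu cw algebra_simps)
    finally have c'u: "c' \<bullet> u \<le> t - 1" by (simp add: M_def)
    show ?thesis
    proof (intro exI ballI conjI)
      fix z assume z: "z \<in> ball c 1"
      have "\<bar>(c - z) \<bullet> u\<bar> < 1" using inner_le_norm1[OF u, of "c - z"] z by (simp add: dist_norm)
      then show "t + 1 < z \<bullet> u" using cu by (simp add: inner_diff_left M_def)
      have sub: "slice u (ball c' 1) (z - (z \<bullet> u) *\<^sub>R u) \<subseteq> {c' \<bullet> u - 1 <..< c' \<bullet> u + 1}"
        by (rule slice_ball_sub[OF u])
      then show "slice u (ball (reflect w \<tau> c) 1) (z - (z \<bullet> u) *\<^sub>R u) \<subseteq> {..<t}"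
        using c'u by (auto simp: c'_def)
      have "emeasure lebesgue (slice u (ball c' 1) (z - (z \<bullet> u) *\<^sub>R u))
          \<le> emeasure lebesgue {c' \<bullet> u - 1 .. c' \<bullet> u + 1}"
        by (rule emeasure_mono) (use sub in auto)
      also have "\<dots> = ennreal (2 * 1)" by simp
      finally show "emeasure lebesgue (slice u (ball (reflect w \<tau> c) 1) (z - (z \<bullet> u) *\<^sub>R u)) \<le> ennreal (2 * 1)"
        by (simp add: c'_def)
    qed
  next
    case True
    have uw: "u \<bullet> w = 0" using True by (simp add: a_def inner_commute)
    define c where "c = (\<tau> + 1) *\<^sub>R w + (t + 2) *\<^sub>R u"
    define c' where "c' = reflect w \<tau> c"
    have cu: "c \<bullet> u = t + 2" using True uu by (simp add: c_def a_def inner_add_left)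
    have cw: "c \<bullet> w = \<tau> + 1" using uw ww by (simp add: c_def inner_add_left)
    have cc: "c - c' = 2 *\<^sub>R w" using reflect_diff[of c w \<tau>] cw by (simp add: c'_def)
    have ccw: "c \<bullet> w - c' \<bullet> w = 2"
    proof -
      have "(c - c') \<bullet> w = 2" using cc ww by simp
      then show ?thesis by (simp add: inner_diff_left)
    qed
    show ?thesis
    proof (intro exI ballI conjI)
      fix z assume z: "z \<in> ball c 1"
      have zc: "\<bar>(c - z) \<bullet> w\<bar> < 1" using inner_le_norm1[OF w, of "c - z"] z by (simp add: dist_norm)
      have "\<bar>(c - z) \<bullet> u\<bar> < 1" using inner_le_norm1[OF u, of "c - z"] z by (simp add: dist_norm)
      then show "t + 1 < z \<bullet> u" using cu by (simp add: inner_diff_left)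
      have empty: "slice u (ball c' 1) (z - (z \<bullet> u) *\<^sub>R u) = {}"
      proof (rule ccontr)
        assume "slice u (ball c' 1) (z - (z \<bullet> u) *\<^sub>R u) \<noteq> {}"
        then obtain s where "s \<in> slice u (ball c' 1) (z - (z \<bullet> u) *\<^sub>R u)" by blast
        then have d: "norm (c' - (z - (z \<bullet> u) *\<^sub>R u + s *\<^sub>R u)) < 1"
          by (simp add: slice_def dist_norm)
        have "\<bar>(c' - (z - (z \<bullet> u) *\<^sub>R u + s *\<^sub>R u)) \<bullet> w\<bar> < 1"
          using inner_le_norm1[OF w] d le_less_trans by blast
        then have "\<bar>c' \<bullet> w - z \<bullet> w\<bar> < 1" using uw by (simp add: inner_diff_left inner_add_left)
        moreover have "\<bar>c \<bullet> w - z \<bullet> w\<bar> < 1" using zc by (simp add: inner_diff_left)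
        ultimately show False using ccw by linarith
      qed
      then show "slice u (ball (reflect w \<tau> c) 1) (z - (z \<bullet> u) *\<^sub>R u) \<subseteq> {..<t}"
        by (simp add: c'_def)
      show "emeasure lebesgue (slice u (ball (reflect w \<tau> c) 1) (z - (z \<bullet> u) *\<^sub>R u)) \<le> ennreal (2 * 1)"
        using empty by (simp add: c'_def)
    qed
  qed
  then obtain c where c: "\<forall>z\<in>ball c 1. t + 1 < z \<bullet> u \<and>
      slice u (ball (reflect w \<tau> c) 1) (z - (z \<bullet> u) *\<^sub>R u) \<subseteq> {..<t} \<and>
      emeasure lebesgue (slice u (ball (reflect w \<tau> c) 1) (z - (z \<bullet> u) *\<^sub>R u)) \<le> ennreal (2 * 1)"
    by blast
  have sub: "ball c 1 \<subseteq> solynin u t (ball c 1)"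
  proof
    fix z assume z: "z \<in> ball c 1"
    have "t + 1 < z \<bullet> u" using c z by blast
    then show "z \<in> solynin u t (ball c 1)" using z by (intro sol_in) auto
  qed
  have disj: "ball c 1 \<inter> solynin u t (reflect w \<tau> ` ball c 1) = {}"
  proof -
    have "z \<notin> solynin u t (ball (reflect w \<tau> c) 1)" if z: "z \<in> ball c 1" for z
      using c z by (intro sol_notin[where \<rho> = 1]) auto
    then show ?thesis by (auto simp: reflect_ball[OF w])
  qed
  have "emeasure lebesgue (ball c 1) = 0"
    using kw[rule_format, of "ball c 1" c 1] sub disj by simp
  then show False using ball_pos[of c] by simp
qed

theorem lemma5p3:
  shows
   "(\<forall>(E :: 'a::euclidean_space set set) D.
       E \<subseteq> Ln \<and> (\<forall>x r. ball x r \<in> E) \<and> (\<forall>A\<in>E. D A \<in> Ln) \<and> seq_approx E D \<longrightarrow>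
       (\<exists>u t. norm u = 1 \<and>
          (\<forall>x r. (D (ball x r) - D (reflect u t ` ball x r)) \<union>
                 (D (reflect u t ` ball x r) - D (ball x r)) \<in> null_sets lebesgue)))
    \<and> (\<forall>(E :: 'a set set) v.
       E \<subseteq> Ln \<and> (\<forall>x r. ball x r \<in> E) \<longrightarrow> \<not> seq_approx E (\<lambda>A. (\<lambda>x. x + v) ` A))
    \<and> (\<forall>(E :: 'a set set) D u t0 b.
       E \<subseteq> Ln \<and> (\<forall>x r. ball x r \<in> E) \<and> (\<forall>A\<in>E. D A \<in> Ln) \<and>
       norm u = 1 \<and> 0 < b \<and> b \<le> 1 \<and>
       (\<forall>x r. (D (ball x r) - ball (x + ((b - 1) * (x \<bullet> u - t0)) *\<^sub>R u) r) \<union>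
              (ball (x + ((b - 1) * (x \<bullet> u - t0)) *\<^sub>R u) r - D (ball x r)) \<in> null_sets lebesgue)
       \<longrightarrow> \<not> seq_approx E D)
    \<and> (\<forall>(E :: 'a set set) u t.
       E \<subseteq> Ln \<and> (\<forall>x r. ball x r \<in> E) \<and> norm u = 1 \<longrightarrow> \<not> seq_approx E (solynin u t))"
proof (intro conjI allI impI)
  fix E :: "'a set set" and D
  assume "E \<subseteq> Ln \<and> (\<forall>x r. ball x r \<in> E) \<and> (\<forall>A\<in>E. D A \<in> Ln) \<and> seq_approx E D"
  then show "\<exists>u t. norm u = 1 \<and>
          (\<forall>x r. (D (ball x r) - D (reflect u t ` ball x r)) \<union>
                 (D (reflect u t ` ball x r) - D (ball x r)) \<in> null_sets lebesgue)"
    using part1 by blast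
next
  fix E :: "'a set set" and v :: 'a
  assume "E \<subseteq> Ln \<and> (\<forall>x r. ball x r \<in> E)"
  then show "\<not> seq_approx E (\<lambda>A. (\<lambda>x. x + v) ` A)" using part2 by blast
next
  fix E :: "'a set set" and D u t0 and b :: real
  assume h: "E \<subseteq> Ln \<and> (\<forall>x r. ball x r \<in> E) \<and> (\<forall>A\<in>E. D A \<in> Ln) \<and>
       norm u = 1 \<and> 0 < b \<and> b \<le> 1 \<and>
       (\<forall>x r. (D (ball x r) - ball (x + ((b - 1) * (x \<bullet> u - t0)) *\<^sub>R u) r) \<union>
              (ball (x + ((b - 1) * (x \<bullet> u - t0)) *\<^sub>R u) r - D (ball x r)) \<in> null_sets lebesgue)"
  show "\<not> seq_approx E D"
    by (rule part3[where u = u and b = b and tz = t0]) (use h in auto)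
next
  fix E :: "'a set set" and u :: 'a and t
  assume "E \<subseteq> Ln \<and> (\<forall>x r. ball x r \<in> E) \<and> norm u = 1"
  then show "\<not> seq_approx E (solynin u t)" using part4 by blast
qed

end
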